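(* Let $\wp\colon\tilde X\to X$ be a $G$-admissible $2$-cover of connected graphs, where $G\leq\mathrm{Aut}\,X$ is vertex-transitive and edge-transitive. Then $\wp$ is $G$-split with a sectional complement if and only if $\wp$ is the canonical double cover. (Equivalently, if $\wp$ is $G$-split, then it is split-transitive relative to $G$ if and only if $\wp$ is not the canonical double cover.)
   Context: Graphs are finite and simple; maps are composed on the right. A regular covering projection $\wp\colon\tilde X\to X$ is a surjective graph homomorphism, locally bijective on neighbourhoods, such that the group $\mathrm{CT}(\wp)$ of covering transformations (automorphisms $c$ of $\tilde X$ with $c\wp=\wp$) acts regularly on each fibre; a $2$-cover has $\mathrm{CT}(\wp)\cong\mathbb{Z}_2$. A lift of $g\in\mathrm{Aut}\,X$ is $\tilde g\in\mathrm{Aut}\,\tilde X$ with $\wp g=\tilde g\wp$; $\wp$ is $G$-admissible if every $g\in G$ has a lift, and then the lifted group $\tilde G$ is the group of all such lifts. $\wp$ is $G$-split if $\mathrm{CT}(\wp)$ has a complement in $\tilde G$. A section is a vertex set of $\tilde X$ meeting each fibre in exactly one vertex; a complement is sectional if it leaves some section invariant and transitive if it is transitive on $V(\tilde X)$; $\wp$ is split-transitive relative to $G$ if it is $G$-split and all complements of $\mathrm{CT}(\wp)$ in $\tilde G$ are transitive. The canonical double cover of $X$ is the $2$-cover obtained as the derived graph of the constant voltage assignment $\zeta(x)=1$ for all arcs $x$ (vertex set $V(X)\times\mathbb{Z}_2$, $(u,i)\sim(v,i+1)$ whenever $u\sim v$, projection $(u,i)\mapsto u$); "$\wp$ is the canonical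 double cover" means $\wp$ is isomorphic to this projection (via an isomorphism of covering graphs commuting with the projections). *)

theory Defs
  imports Main
begin

definition simple_graph :: "'a set \<Rightarrow> ('a \<Rightarrow> 'a \<Rightarrow> bool) \<Rightarrow> bool" where
  "simple_graph V E \<longleftrightarrow> finite V \<and> (\<forall>u v. E u v \<longrightarrow> u \<in> V \<and> v \<in> V)
     \<and> (\<forall>u v. E u v \<longrightarrow> E v u) \<and> (\<forall>u. \<not> E u u)"

definition connected_graph :: "'a set \<Rightarrow> ('a \<Rightarrow> 'a \<Rightarrow> bool) \<Rightarrow> bool" where
  "connected_graph V E \<longleftrightarrow> V \<noteq> {} \<and> (\<forall>u\<in>V. \<forall>v\<in>V. E\<^sup>*\<^sup>* u v)"

definition aut :: "'a set \<Rightarrow> ('a \<Rightarrow> 'a \<Rightarrow> bool) \<Rightarrow> ('a \<Rightarrow> 'a) set" where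
  "aut V E = {f. bij_betw f V V \<and> (\<forall>x. x \<notin> V \<longrightarrow> f x = x)
                \<and> (\<forall>u\<in>V. \<forall>v\<in>V. E (f u) (f v) \<longleftrightarrow> E u v)}"

definition is_subgroup :: "('a \<Rightarrow> 'a) set \<Rightarrow> ('a \<Rightarrow> 'a) set \<Rightarrow> bool" where
  "is_subgroup H A \<longleftrightarrow> H \<subseteq> A \<and> id \<in> H \<and> (\<forall>g\<in>H. \<forall>h\<in>H. g \<circ> h \<in> H)
     \<and> (\<forall>g\<in>H. \<exists>h\<in>H. g \<circ> h = id \<and> h \<circ> g = id)"

definition vertex_transitive :: "'a set \<Rightarrow> ('a \<Rightarrow> 'a) set \<Rightarrow> bool" where
  "vertex_transitive V G \<longleftrightarrow> (\<forall>u\<in>V. \<forall>v\<in>V. \<exists>g\<in>G. g u = v)"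

definition edge_transitive :: "('a \<Rightarrow> 'a \<Rightarrow> bool) \<Rightarrow> ('a \<Rightarrow> 'a) set \<Rightarrow> bool" where
  "edge_transitive E G \<longleftrightarrow> (\<forall>u v x y. E u v \<longrightarrow> E x y \<longrightarrow>
      (\<exists>g\<in>G. {g u, g v} = {x, y}))"

definition covering_projection ::
  "'b set \<Rightarrow> ('b \<Rightarrow> 'b \<Rightarrow> bool) \<Rightarrow> 'a set \<Rightarrow> ('a \<Rightarrow> 'a \<Rightarrow> bool) \<Rightarrow> ('b \<Rightarrow> 'a) \<Rightarrow> bool" where
  "covering_projection V' E' V E p \<longleftrightarrow> p ` V' = V
     \<and> (\<forall>x y. E' x y \<longrightarrow> E (p x) (p y))
     \<and> (\<forall>x\<in>V'. bij_betw p {y\<in>V'. E' x y} {u\<in>V. E (p x) u})"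

definition fibre :: "'b set \<Rightarrow> ('b \<Rightarrow> 'a) \<Rightarrow> 'a \<Rightarrow> 'b set" where
  "fibre V' p v = {x\<in>V'. p x = v}"

definition CT :: "'b set \<Rightarrow> ('b \<Rightarrow> 'b \<Rightarrow> bool) \<Rightarrow> ('b \<Rightarrow> 'a) \<Rightarrow> ('b \<Rightarrow> 'b) set" where
  "CT V' E' p = {c\<in>aut V' E'. \<forall>x\<in>V'. p (c x) = p x}"

definition two_cover ::
  "'b set \<Rightarrow> ('b \<Rightarrow> 'b \<Rightarrow> bool) \<Rightarrow> 'a set \<Rightarrow> ('a \<Rightarrow> 'a \<Rightarrow> bool) \<Rightarrow> ('b \<Rightarrow> 'a) \<Rightarrow> bool" where
  "two_cover V' E' V E p \<longleftrightarrow> covering_projection V' E' V E p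
     \<and> card (CT V' E' p) = 2
     \<and> (\<forall>v\<in>V. \<forall>x\<in>fibre V' p v. \<forall>y\<in>fibre V' p v. \<exists>!c\<in>CT V' E' p. c x = y)"

text \<open>Lifts (maps composed on the right: p g = g' p means g (p x) = p (g' x)).\<close>
definition is_lift ::
  "'b set \<Rightarrow> ('b \<Rightarrow> 'b \<Rightarrow> bool) \<Rightarrow> ('b \<Rightarrow> 'a) \<Rightarrow> ('a \<Rightarrow> 'a) \<Rightarrow> ('b \<Rightarrow> 'b) \<Rightarrow> bool" where
  "is_lift V' E' p g g' \<longleftrightarrow> g' \<in> aut V' E' \<and> (\<forall>x\<in>V'. g (p x) = p (g' x))"

definition admissible ::
  "'b set \<Rightarrow> ('b \<Rightarrow> 'b \<Rightarrow> bool) \<Rightarrow> ('b \<Rightarrow> 'a) \<Rightarrow> ('a \<Rightarrow> 'a) set \<Rightarrow> bool" where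
  "admissible V' E' p G \<longleftrightarrow> (\<forall>g\<in>G. \<exists>g'. is_lift V' E' p g g')"

definition lifted_group ::
  "'b set \<Rightarrow> ('b \<Rightarrow> 'b \<Rightarrow> bool) \<Rightarrow> ('b \<Rightarrow> 'a) \<Rightarrow> ('a \<Rightarrow> 'a) set \<Rightarrow> ('b \<Rightarrow> 'b) set" where
  "lifted_group V' E' p G = {g'. \<exists>g\<in>G. is_lift V' E' p g g'}"

definition is_complement ::
  "'b set \<Rightarrow> ('b \<Rightarrow> 'b \<Rightarrow> bool) \<Rightarrow> ('b \<Rightarrow> 'a) \<Rightarrow> ('a \<Rightarrow> 'a) set \<Rightarrow> ('b \<Rightarrow> 'b) set \<Rightarrow> bool" where
  "is_complement V' E' p G K \<longleftrightarrow> is_subgroup K (lifted_group V' E' p G)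
     \<and> K \<inter> CT V' E' p = {id}
     \<and> (\<forall>h\<in>lifted_group V' E' p G. \<exists>k\<in>K. \<exists>c\<in>CT V' E' p. h = k \<circ> c)"

definition G_split ::
  "'b set \<Rightarrow> ('b \<Rightarrow> 'b \<Rightarrow> bool) \<Rightarrow> ('b \<Rightarrow> 'a) \<Rightarrow> ('a \<Rightarrow> 'a) set \<Rightarrow> bool" where
  "G_split V' E' p G \<longleftrightarrow> (\<exists>K. is_complement V' E' p G K)"

definition is_section :: "'b set \<Rightarrow> 'a set \<Rightarrow> ('b \<Rightarrow> 'a) \<Rightarrow> 'b set \<Rightarrow> bool" where
  "is_section V' V p S \<longleftrightarrow> S \<subseteq> V' \<and> (\<forall>v\<in>V. card (S \<inter> fibre V' p v) = 1)"

definition sectional ::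
  "'b set \<Rightarrow> 'a set \<Rightarrow> ('b \<Rightarrow> 'a) \<Rightarrow> ('b \<Rightarrow> 'b) set \<Rightarrow> bool" where
  "sectional V' V p K \<longleftrightarrow> (\<exists>S. is_section V' V p S \<and> (\<forall>k\<in>K. k ` S = S))"

text \<open>Canonical double cover of (V,E): vertices V \<times> Z_2 (Z_2 = bool),
  (u,i) ~ (v,j) iff u ~ v and j = i + 1, projection fst.\<close>
definition cdc_edge :: "('a \<Rightarrow> 'a \<Rightarrow> bool) \<Rightarrow> 'a \<times> bool \<Rightarrow> 'a \<times> bool \<Rightarrow> bool" where
  "cdc_edge E x y \<longleftrightarrow> E (fst x) (fst y) \<and> snd y = (\<not> snd x)"

definition is_canonical_double_cover ::
  "'b set \<Rightarrow> ('b \<Rightarrow> 'b \<Rightarrow> bool) \<Rightarrow> 'a set \<Rightarrow> ('a \<Rightarrow> 'a \<Rightarrow> bool) \<Rightarrow> ('b \<Rightarrow> 'a) \<Rightarrow> bool" where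
  "is_canonical_double_cover V' E' V E p \<longleftrightarrow>
     (\<exists>\<phi>. bij_betw \<phi> V' (V \<times> UNIV)
        \<and> (\<forall>x\<in>V'. \<forall>y\<in>V'. cdc_edge E (\<phi> x) (\<phi> y) \<longleftrightarrow> E' x y)
        \<and> (\<forall>x\<in>V'. fst (\<phi> x) = p x))"

end

theory Submission
  imports Defs
begin


lemma aut_comp: "f \<in> aut V E \<Longrightarrow> g \<in> aut V E \<Longrightarrow> f \<circ> g \<in> aut V E"
  unfolding aut_def
  by (auto intro: bij_betw_trans simp: bij_betw_apply)

lemma id_aut: "id \<in> aut V E"
  unfolding aut_def by auto

lemma id_CT: "id \<in> CT V' E' p"
  unfolding CT_def using id_aut by auto

lemma bwd:
  assumes sub: "is_subgroup G (aut V E)"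
    and cov: "covering_projection V' E' V E p"
    and cdc: "is_canonical_double_cover V' E' V E p"
  shows "\<exists>K. is_complement V' E' p G K \<and> sectional V' V p K"
proof -
  obtain \<phi> where bij: "bij_betw \<phi> V' (V \<times> (UNIV::bool set))"
    and ed: "\<And>x y. x\<in>V' \<Longrightarrow> y\<in>V' \<Longrightarrow> cdc_edge E (\<phi> x) (\<phi> y) \<longleftrightarrow> E' x y"
    and fp: "\<And>x. x\<in>V' \<Longrightarrow> fst (\<phi> x) = p x"
    using cdc unfolding is_canonical_double_cover_def by blast
  have pV: "p ` V' = V" using cov unfolding covering_projection_def by blast
  define \<psi> where "\<psi> = inv_into V' \<phi>"
  have injp: "inj_on \<phi> V'" using bij by (rule bij_betw_imp_inj_on)
  have \<phi>V: "\<And>z. z \<in> V' \<Longrightarrow> \<phi> z \<in> V \<times> (UNIV::bool set)" using bij by (rule bij_betw_apply)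
  have fV: "\<And>z. z \<in> V' \<Longrightarrow> fst (\<phi> z) \<in> V" using \<phi>V by (metis mem_Times_iff)
  have \<psi>V: "\<And>y. y \<in> V \<times> (UNIV::bool set) \<Longrightarrow> \<psi> y \<in> V'"
  proof -
    fix y assume "y \<in> V \<times> (UNIV::bool set)"
    moreover have "bij_betw \<psi> (V \<times> (UNIV::bool set)) V'" unfolding \<psi>_def using bij by (rule bij_betw_inv_into)
    ultimately show "\<psi> y \<in> V'" by (rule bij_betw_apply[rotated])
  qed
  have \<phi>\<psi>: "\<And>y. y \<in> V \<times> (UNIV::bool set) \<Longrightarrow> \<phi> (\<psi> y) = y"
  proof -
    fix y assume "y \<in> V \<times> (UNIV::bool set)"
    then have "y \<in> \<phi> ` V'" using bij bij_betw_imp_surj_on by blast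
    then show "\<phi> (\<psi> y) = y" unfolding \<psi>_def by (rule f_inv_into_f)
  qed
  have \<psi>\<phi>: "\<And>z. z \<in> V' \<Longrightarrow> \<psi> (\<phi> z) = z"
    unfolding \<psi>_def using injp by (rule inv_into_f_f)
  have \<phi>inj: "\<And>z w. z \<in> V' \<Longrightarrow> w \<in> V' \<Longrightarrow> \<phi> z = \<phi> w \<Longrightarrow> z = w"
    using injp by (rule inj_onD)
  define kk where "kk g = (\<lambda>z. if z \<in> V' then \<psi> (g (fst (\<phi> z)), snd (\<phi> z)) else z)" for g :: "'a \<Rightarrow> 'a"
  have GA: "G \<subseteq> aut V E" using sub unfolding is_subgroup_def by blast
  have autV: "\<And>g u. g \<in> aut V E \<Longrightarrow> u \<in> V \<Longrightarrow> g u \<in> V"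
  proof -
    fix g u assume "g \<in> aut V E" "u \<in> V"
    then have "bij_betw g V V" "u \<in> V" unfolding aut_def by auto
    then show "g u \<in> V" by (rule bij_betw_apply)
  qed
  have k1: "\<And>g z. g \<in> aut V E \<Longrightarrow> z \<in> V' \<Longrightarrow> kk g z \<in> V' \<and> \<phi> (kk g z) = (g (fst (\<phi> z)), snd (\<phi> z))"
  proof -
    fix g z assume g: "g \<in> aut V E" and z: "z \<in> V'"
    have "fst (\<phi> z) \<in> V" using fV[OF z] by auto
    then have m: "(g (fst (\<phi> z)), snd (\<phi> z)) \<in> V \<times> (UNIV::bool set)" using autV[OF g] by auto
    show "kk g z \<in> V' \<and> \<phi> (kk g z) = (g (fst (\<phi> z)), snd (\<phi> z))"
      unfolding kk_def using z \<psi>V[OF m] \<phi>\<psi>[OF m] by simp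
  qed
  have kout: "\<And>g z. z \<notin> V' \<Longrightarrow> kk g z = z" unfolding kk_def by simp
  have k2: "\<And>g. g \<in> aut V E \<Longrightarrow> kk g \<in> aut V' E'"
  proof -
    fix g assume g: "g \<in> aut V E"
    have ginj: "inj_on g V" using g unfolding aut_def bij_betw_def by blast
    have gim: "g ` V = V" using g unfolding aut_def bij_betw_def by blast
    have gE: "\<forall>u\<in>V. \<forall>v\<in>V. E (g u) (g v) \<longleftrightarrow> E u v" using g unfolding aut_def by blast
    have inj: "inj_on (kk g) V'"
    proof (rule inj_onI)
      fix z w assume z: "z \<in> V'" and w: "w \<in> V'" and eq: "kk g z = kk g w"
      have "(g (fst (\<phi> z)), snd (\<phi> z)) = (g (fst (\<phi> w)), snd (\<phi> w))"
        using k1[OF g z] k1[OF g w] eq by simp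
      moreover have "fst (\<phi> z) \<in> V" "fst (\<phi> w) \<in> V" using fV z w by auto
      ultimately have "fst (\<phi> z) = fst (\<phi> w)" "snd (\<phi> z) = snd (\<phi> w)" using inj_onD[OF ginj] by auto
      then have "\<phi> z = \<phi> w" by (rule prod_eqI)
      then show "z = w" using \<phi>inj z w by blast
    qed
    have im: "kk g ` V' = V'"
    proof
      show "kk g ` V' \<subseteq> V'"
      proof
        fix y assume "y \<in> kk g ` V'"
        then obtain x where "x \<in> V'" "y = kk g x" by blast
        then show "y \<in> V'" using k1[OF g] by simp
      qed
      show "V' \<subseteq> kk g ` V'"
      proof
        fix w assume w: "w \<in> V'"
        obtain u' i where pw: "\<phi> w = (u', i)" by (cases "\<phi> w")
        have "u' \<in> V" using fV[OF w] pw by auto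
        then have "u' \<in> g ` V" using gim by simp
        then obtain u where u: "u \<in> V" "g u = u'" by (auto simp: image_iff)
        have m: "(u, i) \<in> V \<times> (UNIV::bool set)" using u by simp
        define z where "z = \<psi> (u, i)"
        have z: "z \<in> V'" "\<phi> z = (u, i)" using \<psi>V[OF m] \<phi>\<psi>[OF m] z_def by auto
        have "\<phi> (kk g z) = \<phi> w" using k1[OF g z(1)] z(2) u pw by simp
        then have "kk g z = w" using \<phi>inj[of "kk g z" w] k1[OF g z(1)] w by simp
        then show "w \<in> kk g ` V'" using z(1) by (auto simp: image_iff)
      qed
    qed
    have edges: "\<forall>u\<in>V'. \<forall>v\<in>V'. E' (kk g u) (kk g v) \<longleftrightarrow> E' u v"
    proof (intro ballI)
      fix z w assume z: "z \<in> V'" and w: "w \<in> V'"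
      have "fst (\<phi> z) \<in> V" "fst (\<phi> w) \<in> V" using fV z w by auto
      then have "E (g (fst (\<phi> z))) (g (fst (\<phi> w))) \<longleftrightarrow> E (fst (\<phi> z)) (fst (\<phi> w))" using gE by blast
      then have "cdc_edge E (\<phi> (kk g z)) (\<phi> (kk g w)) \<longleftrightarrow> cdc_edge E (\<phi> z) (\<phi> w)"
        using k1[OF g z] k1[OF g w] unfolding cdc_edge_def by simp
      then show "E' (kk g z) (kk g w) \<longleftrightarrow> E' z w"
        using ed[OF k1[OF g z, THEN conjunct1] k1[OF g w, THEN conjunct1]] ed[OF z w] by simp
    qed
    show "kk g \<in> aut V' E'" by (simp add: aut_def bij_betw_def inj im edges kout)
  qed
  have k3: "\<And>g z. g \<in> aut V E \<Longrightarrow> z \<in> V' \<Longrightarrow> g (p z) = p (kk g z)"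
    using k1 fp by (metis fst_conv)
  have k4: "\<And>g h. g \<in> aut V E \<Longrightarrow> h \<in> aut V E \<Longrightarrow> kk (g \<circ> h) = kk g \<circ> kk h"
  proof
    fix g h z assume g: "g \<in> aut V E" and h: "h \<in> aut V E"
    show "kk (g \<circ> h) z = (kk g \<circ> kk h) z"
    proof (cases "z \<in> V'")
      case True
      have gh: "g \<circ> h \<in> aut V E" using aut_comp g h by blast
      have a: "kk (g \<circ> h) z \<in> V'" "\<phi> (kk (g \<circ> h) z) = (g (h (fst (\<phi> z))), snd (\<phi> z))"
        using k1[OF gh True] by auto
      have b: "kk g (kk h z) \<in> V'" "\<phi> (kk g (kk h z)) = (g (h (fst (\<phi> z))), snd (\<phi> z))"
        using k1[OF h True] k1[OF g, of "kk h z"] by auto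
      show ?thesis using \<phi>inj a b by simp
    next
      case False then show ?thesis using kout by simp
    qed
  qed
  have k5: "kk id = id"
  proof
    fix z show "kk id z = id z"
      unfolding kk_def using \<psi>\<phi> by simp
  qed
  define K where "K = kk ` G"
  have idG: "id \<in> G" using sub unfolding is_subgroup_def by blast
  have Ginv: "\<And>g. g \<in> G \<Longrightarrow> \<exists>h\<in>G. g \<circ> h = id \<and> h \<circ> g = id" using sub unfolding is_subgroup_def by blast
  have Gcomp: "\<And>g h. g \<in> G \<Longrightarrow> h \<in> G \<Longrightarrow> g \<circ> h \<in> G" using sub unfolding is_subgroup_def by blast
  have Klift: "\<And>g. g \<in> G \<Longrightarrow> is_lift V' E' p g (kk g)"
    unfolding is_lift_def using k2 k3 GA by auto
  have KL: "K \<subseteq> lifted_group V' E' p G"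
    unfolding K_def lifted_group_def using Klift by auto
  have subK: "is_subgroup K (lifted_group V' E' p G)"
    unfolding is_subgroup_def
  proof (intro conjI ballI)
    show "K \<subseteq> lifted_group V' E' p G" by (rule KL)
    show "id \<in> K" unfolding K_def using k5 idG by force
  next
    fix a b assume "a \<in> K" "b \<in> K"
    then obtain g h where gh: "g \<in> G" "h \<in> G" "a = kk g" "b = kk h" unfolding K_def by blast
    then have "g \<in> aut V E" "h \<in> aut V E" using GA by auto
    then have "a \<circ> b = kk (g \<circ> h)" using k4 gh by simp
    moreover have "g \<circ> h \<in> G" using Gcomp gh by blast
    ultimately show "a \<circ> b \<in> K" unfolding K_def by simp
  next
    fix a assume "a \<in> K"
    then obtain g where g: "g \<in> G" "a = kk g" unfolding K_def by blast
    then obtain h where h: "h \<in> G" "g \<circ> h = id" "h \<circ> g = id" using Ginv by blast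
    have ga: "g \<in> aut V E" and ha: "h \<in> aut V E" using GA g h by auto
    have "kk g \<circ> kk h = id" using k4[OF ga ha] h k5 by simp
    moreover have "kk h \<circ> kk g = id" using k4[OF ha ga] h k5 by simp
    ultimately have "kk g \<circ> kk h = id" "kk h \<circ> kk g = id" by auto
    then show "\<exists>b\<in>K. a \<circ> b = id \<and> b \<circ> a = id" using g h unfolding K_def by blast
  qed
  have capK: "K \<inter> CT V' E' p = {id}"
  proof
    show "{id} \<subseteq> K \<inter> CT V' E' p" using id_CT k5 idG unfolding K_def by force
    show "K \<inter> CT V' E' p \<subseteq> {id}"
    proof
      fix a assume a: "a \<in> K \<inter> CT V' E' p"
      then obtain g where g: "g \<in> G" "a = kk g" unfolding K_def by blast
      have ga: "g \<in> aut V E" using g GA by blast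
      have pa: "\<And>z. z \<in> V' \<Longrightarrow> p (a z) = p z" using a unfolding CT_def by blast
      have "g = id"
      proof
        fix x show "g x = id x"
        proof (cases "x \<in> V")
          case True
          then obtain z where z: "z \<in> V'" "x = p z" using pV by blast
          show ?thesis using k3[OF ga z(1)] pa[OF z(1)] g z by simp
        next
          case False then show ?thesis using ga unfolding aut_def by simp
        qed
      qed
      then show "a \<in> {id}" using g k5 by simp
    qed
  qed
  have decomp: "\<forall>h\<in>lifted_group V' E' p G. \<exists>k\<in>K. \<exists>c\<in>CT V' E' p. h = k \<circ> c"
  proof
    fix h assume "h \<in> lifted_group V' E' p G"
    then obtain g where g: "g \<in> G" "is_lift V' E' p g h" unfolding lifted_group_def by blast
    obtain g' where g': "g' \<in> G" "g \<circ> g' = id" "g' \<circ> g = id" using Ginv g by blast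
    have ha: "h \<in> aut V' E'" and hl: "\<And>x. x \<in> V' \<Longrightarrow> g (p x) = p (h x)"
      using g unfolding is_lift_def by auto
    have hb: "bij_betw h V' V'" using ha unfolding aut_def by blast
    have hV: "\<And>x. x \<in> V' \<Longrightarrow> h x \<in> V'" using hb by (rule bij_betw_apply)
    have c: "kk g' \<circ> h \<in> CT V' E' p"
      unfolding CT_def
    proof (intro CollectI conjI ballI)
      show "kk g' \<circ> h \<in> aut V' E'" using aut_comp k2 ha g' GA by blast
    next
      fix x assume x: "x \<in> V'"
      have "p ((kk g' \<circ> h) x) = g' (p (h x))" using k3 g' GA hV[OF x] by (metis comp_apply subsetD)
      also have "\<dots> = g' (g (p x))" using hl x by simp
      also have "\<dots> = p x" using g' by (metis comp_apply id_apply)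
      finally show "p ((kk g' \<circ> h) x) = p x" .
    qed
    have "kk g \<circ> (kk g' \<circ> h) = h" using k4 g g' GA k5 by (metis comp_assoc id_comp subsetD)
    then show "\<exists>k\<in>K. \<exists>c\<in>CT V' E' p. h = k \<circ> c" using c g unfolding K_def by (metis image_eqI)
  qed
  define S where "S = {z \<in> V'. snd (\<phi> z)}"
  have secS: "is_section V' V p S"
    unfolding is_section_def
  proof (intro conjI ballI)
    show "S \<subseteq> V'" unfolding S_def by blast
  next
    fix v assume v: "v \<in> V"
    have m: "(v, True) \<in> V \<times> (UNIV::bool set)" using v by simp
    have "S \<inter> fibre V' p v = {\<psi> (v, True)}"
    proof
      show "{\<psi> (v, True)} \<subseteq> S \<inter> fibre V' p v"
        using \<psi>V[OF m] \<phi>\<psi>[OF m] fp[of "\<psi> (v, True)"] unfolding S_def fibre_def by force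
      show "S \<inter> fibre V' p v \<subseteq> {\<psi> (v, True)}"
      proof
        fix z assume "z \<in> S \<inter> fibre V' p v"
        then have z: "z \<in> V'" "snd (\<phi> z)" "p z = v" unfolding S_def fibre_def by auto
        then have "\<phi> z = (v, True)" using fp[OF z(1)] by (simp add: prod_eq_iff)
        then show "z \<in> {\<psi> (v, True)}" using \<psi>\<phi>[OF z(1)] by simp
      qed
    qed
    then show "card (S \<inter> fibre V' p v) = 1" by simp
  qed
  have invS: "\<forall>k\<in>K. k ` S = S"
  proof
    fix k assume "k \<in> K"
    then obtain g where g: "g \<in> G" "k = kk g" unfolding K_def by blast
    obtain g' where g': "g' \<in> G" "g \<circ> g' = id" "g' \<circ> g = id" using Ginv g by blast
    have sub1: "\<And>f. f \<in> G \<Longrightarrow> kk f ` S \<subseteq> S"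
      unfolding S_def using k1 GA by auto
    have "S \<subseteq> kk g ` S"
    proof
      fix z assume z: "z \<in> S"
      have "kk g (kk g' z) = z" using k4 g g' GA k5 by (metis comp_apply id_apply subsetD)
      moreover have "kk g' z \<in> S" using sub1[OF g'(1)] z by blast
      ultimately show "z \<in> kk g ` S" by (metis image_eqI)
    qed
    then show "k ` S = S" using sub1[OF g(1)] g by blast
  qed
  have c1: "is_complement V' E' p G K" unfolding is_complement_def using subK capK decomp by simp
  have c2: "sectional V' V p K" unfolding sectional_def using secS invS by blast
  show ?thesis using c1 c2 by blast
qed



lemma fwd:
  assumes sg': "simple_graph V' E'" and conn': "connected_graph V' E'"
    and tc: "two_cover V' E' V E p"
    and et: "edge_transitive E G"
    and adm: "admissible V' E' p G"
    and compl: "is_complement V' E' p G K"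
    and sec: "is_section V' V p S"
    and inv: "\<forall>k\<in>K. k ` S = S"
  shows "is_canonical_double_cover V' E' V E p"
proof -
  have cov: "covering_projection V' E' V E p" using tc unfolding two_cover_def by blast
  have pV: "p ` V' = V" using cov unfolding covering_projection_def by blast
  have pE: "\<And>x y. E' x y \<Longrightarrow> E (p x) (p y)" using cov unfolding covering_projection_def by blast
  have loc: "\<And>x. x \<in> V' \<Longrightarrow> bij_betw p {y\<in>V'. E' x y} {u\<in>V. E (p x) u}"
    using cov unfolding covering_projection_def by blast
  have EV: "\<And>x y. E' x y \<Longrightarrow> x \<in> V' \<and> y \<in> V'" using sg' unfolding simple_graph_def by blast
  have Esym: "\<And>x y. E' x y \<Longrightarrow> E' y x" using sg' unfolding simple_graph_def by blast
  have card2: "card (CT V' E' p) = 2" using tc unfolding two_cover_def by blast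
  have reg: "\<And>v x y. v \<in> V \<Longrightarrow> x \<in> fibre V' p v \<Longrightarrow> y \<in> fibre V' p v \<Longrightarrow> \<exists>!c. c \<in> CT V' E' p \<and> c x = y"
    using tc unfolding two_cover_def by blast
  have idCT: "id \<in> CT V' E' p" unfolding CT_def aut_def by auto
  obtain c1 c2 where CT12: "CT V' E' p = {c1, c2}" "c1 \<noteq> c2" using card2 by (auto simp: card_2_iff)
  obtain c where cCT: "c \<in> CT V' E' p" and cne: "c \<noteq> id" and CTeq: "CT V' E' p = {id, c}"
  proof (cases "c1 = id")
    case True then show ?thesis using that CT12 by auto
  next
    case False
    then have "c2 = id" using idCT CT12 by auto
    then show ?thesis using that CT12 False by auto
  qed
  have caut: "c \<in> aut V' E'" and cp: "\<And>x. x \<in> V' \<Longrightarrow> p (c x) = p x"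
    using cCT unfolding CT_def by auto
  have cbij: "bij_betw c V' V'" using caut unfolding aut_def by blast
  have cV: "\<And>x. x \<in> V' \<Longrightarrow> c x \<in> V'" using cbij by (rule bij_betw_apply)
  have cE: "\<And>x y. x \<in> V' \<Longrightarrow> y \<in> V' \<Longrightarrow> E' (c x) (c y) \<longleftrightarrow> E' x y" using caut unfolding aut_def by blast
  have infib: "\<And>z. z \<in> V' \<Longrightarrow> z \<in> fibre V' p (p z)" unfolding fibre_def by simp
  have pzV: "\<And>z. z \<in> V' \<Longrightarrow> p z \<in> V" using pV by blast
  have cfix: "\<And>z. z \<in> V' \<Longrightarrow> c z \<noteq> z"
  proof
    fix z assume z: "z \<in> V'" and eq: "c z = z"
    have "\<exists>!c'. c' \<in> CT V' E' p \<and> c' z = z" using reg[OF pzV[OF z] infib[OF z] infib[OF z]] .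
    then have "c = id" using cCT idCT eq by auto
    then show False using cne by simp
  qed
  have fib: "\<And>z w. z \<in> V' \<Longrightarrow> w \<in> V' \<Longrightarrow> p w = p z \<Longrightarrow> w = z \<or> w = c z"
  proof -
    fix z w assume z: "z \<in> V'" and w: "w \<in> V'" and pw: "p w = p z"
    have "w \<in> fibre V' p (p z)" using w pw unfolding fibre_def by simp
    then obtain c' where "c' \<in> CT V' E' p" "c' z = w" using reg[OF pzV[OF z] infib[OF z]] by blast
    then show "w = z \<or> w = c z" using CTeq by auto
  qed
  have SV: "S \<subseteq> V'" using sec unfolding is_section_def by blast
  have sc: "\<And>v. v \<in> V \<Longrightarrow> card (S \<inter> fibre V' p v) = 1" using sec unfolding is_section_def by blast
  have suniq: "\<And>x y. x \<in> S \<Longrightarrow> y \<in> S \<Longrightarrow> p x = p y \<Longrightarrow> x = y"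
  proof -
    fix x y assume x: "x \<in> S" and y: "y \<in> S" and pxy: "p x = p y"
    have xV: "x \<in> V'" "y \<in> V'" using x y SV by auto
    have "card (S \<inter> fibre V' p (p x)) = 1" using sc pzV[OF xV(1)] by blast
    then obtain a where a: "S \<inter> fibre V' p (p x) = {a}" by (auto simp: card_1_singleton_iff)
    have "x \<in> S \<inter> fibre V' p (p x)" "y \<in> S \<inter> fibre V' p (p x)"
      using x y xV pxy unfolding fibre_def by auto
    then show "x = y" using a by auto
  qed
  have sex: "\<And>v. v \<in> V \<Longrightarrow> \<exists>x\<in>S. p x = v"
  proof -
    fix v assume v: "v \<in> V"
    have "card (S \<inter> fibre V' p v) = 1" using sc v by blast
    then obtain a where a: "S \<inter> fibre V' p v = {a}" by (auto simp: card_1_singleton_iff)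
    then have "a \<in> S" "p a = v" unfolding fibre_def by auto
    then show "\<exists>x\<in>S. p x = v" by blast
  qed
  have side: "\<And>z. z \<in> V' \<Longrightarrow> z \<in> S \<longleftrightarrow> c z \<notin> S"
  proof -
    fix z assume z: "z \<in> V'"
    show "z \<in> S \<longleftrightarrow> c z \<notin> S"
    proof
      assume "z \<in> S"
      then show "c z \<notin> S" using suniq[of z "c z"] cp[OF z] cfix[OF z] by auto
    next
      assume nc: "c z \<notin> S"
      obtain s where s: "s \<in> S" "p s = p z" using sex pzV[OF z] by blast
      have "s = z \<or> s = c z" using fib[OF z] s SV by blast
      then show "z \<in> S" using s nc by auto
    qed
  qed
  have localinj: "\<And>x y1 y2. E' x y1 \<Longrightarrow> E' x y2 \<Longrightarrow> p y1 = p y2 \<Longrightarrow> y1 = y2"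
  proof -
    fix x y1 y2 assume e1: "E' x y1" and e2: "E' x y2" and eq: "p y1 = p y2"
    have x: "x \<in> V'" using EV e1 by blast
    have i: "inj_on p {y\<in>V'. E' x y}" using loc[OF x] by (rule bij_betw_imp_inj_on)
    have m1: "y1 \<in> {y\<in>V'. E' x y}" and m2: "y2 \<in> {y\<in>V'. E' x y}" using e1 e2 EV by auto
    show "y1 = y2" using inj_onD[OF i eq m1 m2] .
  qed
  have Kaut: "\<And>k. k \<in> K \<Longrightarrow> k \<in> aut V' E'"
  proof -
    fix k assume "k \<in> K"
    then have "k \<in> lifted_group V' E' p G" using compl unfolding is_complement_def is_subgroup_def by blast
    then show "k \<in> aut V' E'" unfolding lifted_group_def is_lift_def by blast
  qed
  have Kex: "\<And>g. g \<in> G \<Longrightarrow> \<exists>k\<in>K. \<forall>z\<in>V'. p (k z) = g (p z)"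
  proof -
    fix g assume g: "g \<in> G"
    obtain h where h: "is_lift V' E' p g h" using adm g unfolding admissible_def by blast
    then have "h \<in> lifted_group V' E' p G" unfolding lifted_group_def using g by blast
    then obtain k c0 where k: "k \<in> K" and c0: "c0 \<in> CT V' E' p" and hk: "h = k \<circ> c0"
      using compl unfolding is_complement_def by blast
    have c0b: "bij_betw c0 V' V'" and c0p: "\<And>x. x \<in> V' \<Longrightarrow> p (c0 x) = p x"
      using c0 unfolding CT_def aut_def by auto
    have "\<forall>z\<in>V'. p (k z) = g (p z)"
    proof
      fix z assume z: "z \<in> V'"
      have "z \<in> c0 ` V'" using c0b z unfolding bij_betw_def by simp
      then obtain w where w: "w \<in> V'" "z = c0 w" by blast
      have "p (k z) = p (h w)" using hk w by simp
      also have "\<dots> = g (p w)" using h w unfolding is_lift_def by simp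
      also have "\<dots> = g (p z)" using c0p w by simp
      finally show "p (k z) = g (p z)" .
    qed
    then show "\<exists>k\<in>K. \<forall>z\<in>V'. p (k z) = g (p z)" using k by blast
  qed
  have allcross: "\<And>x y. E' x y \<Longrightarrow> (x \<in> S \<longleftrightarrow> y \<notin> S)"
  proof (rule ccontr)
    fix x0 y0 assume e0: "E' x0 y0" and ns: "\<not> (x0 \<in> S \<longleftrightarrow> y0 \<notin> S)"
    have x0V: "x0 \<in> V'" and y0V: "y0 \<in> V'" using EV e0 by auto
    obtain a b where ab: "E' a b" "a \<in> S" "b \<in> S"
    proof (cases "x0 \<in> S")
      case True
      then show ?thesis using that e0 ns by auto
    next
      case False
      then have "y0 \<notin> S" using ns by auto
      then have "c x0 \<in> S" "c y0 \<in> S" using side x0V y0V False by auto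
      moreover have "E' (c x0) (c y0)" using cE x0V y0V e0 by blast
      ultimately show ?thesis using that by blast
    qed
    have aV: "a \<in> V'" and bV: "b \<in> V'" using EV ab(1) by auto
    have pres: "\<And>x y. E' x y \<Longrightarrow> (x \<in> S \<longleftrightarrow> y \<in> S)"
    proof -
      fix x y assume exy: "E' x y"
      have xV: "x \<in> V'" and yV: "y \<in> V'" using EV exy by auto
      have key: "x \<in> S \<longleftrightarrow> y \<in> S" if t: "t1 \<in> S" "t2 \<in> S" "E' t1 t2" "p t1 = p x" "p t2 = p y" for t1 t2
      proof -
        have t1V: "t1 \<in> V'" and t2V: "t2 \<in> V'" using t SV by auto
        have "x = t1 \<or> x = c t1" using fib[OF t1V xV] t by simp
        then show ?thesis
        proof
          assume xt: "x = t1"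
          then have "y = t2" using localinj[of x y t2] exy t by simp
          then show ?thesis using xt t by simp
        next
          assume xt: "x = c t1"
          have "E' x (c t2)" using xt cE[OF t1V t2V] t by simp
          moreover have "p (c t2) = p y" using cp[OF t2V] t by simp
          ultimately have "y = c t2" using localinj[of x y "c t2"] exy by simp
          moreover have "c t1 \<notin> S" "c t2 \<notin> S" using side t1V t2V t by auto
          ultimately show ?thesis using xt by simp
        qed
      qed
      have "E (p a) (p b)" "E (p x) (p y)" using pE ab(1) exy by auto
      then obtain g where g: "g \<in> G" "{g (p a), g (p b)} = {p x, p y}"
        using et unfolding edge_transitive_def by blast
      obtain k where k: "k \<in> K" "\<forall>z\<in>V'. p (k z) = g (p z)" using Kex g(1) by blast
      have kS: "k a \<in> S" "k b \<in> S" using inv k(1) ab by blast+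
      have ke: "E' (k a) (k b)" using Kaut[OF k(1)] aV bV ab(1) unfolding aut_def by blast
      have pk: "{p (k a), p (k b)} = {p x, p y}" using k(2) aV bV g(2) by simp
      show "x \<in> S \<longleftrightarrow> y \<in> S"
      proof (cases "p (k a) = p x \<and> p (k b) = p y")
        case True
        then show ?thesis using key[OF kS ke] by blast
      next
        case False
        then have "p (k b) = p x" "p (k a) = p y" using pk by (auto simp: doubleton_eq_iff)
        then show ?thesis using key[OF kS(2) kS(1) Esym[OF ke]] by blast
      qed
    qed
    have "V' \<noteq> {}" using conn' unfolding connected_graph_def by blast
    then obtain z0 where z0: "z0 \<in> V'" by blast
    obtain a0 where a0: "a0 \<in> V'" "a0 \<in> S"
      using side[OF z0] z0 cV[OF z0] by (cases "z0 \<in> S") auto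
    have "E'\<^sup>*\<^sup>* a0 (c a0)" using conn' a0 cV unfolding connected_graph_def by blast
    then have "c a0 \<in> S"
    proof (induction rule: rtranclp_induct)
      case base then show ?case using a0 by simp
    next
      case (step y z) then show ?case using pres by blast
    qed
    then show False using side[OF a0(1)] a0 by simp
  qed
  define \<phi> where "\<phi> z = (p z, z \<in> S)" for z
  have bij: "bij_betw \<phi> V' (V \<times> (UNIV::bool set))"
    unfolding bij_betw_def
  proof
    show "inj_on \<phi> V'"
    proof (rule inj_onI)
      fix z w assume z: "z \<in> V'" and w: "w \<in> V'" and eq: "\<phi> z = \<phi> w"
      then have pw: "p w = p z" and sw: "(w \<in> S) = (z \<in> S)" unfolding \<phi>_def by auto
      have "w = z \<or> w = c z" using fib[OF z w pw] .
      then show "z = w" using side[OF z] sw by auto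
    qed
    show "\<phi> ` V' = V \<times> (UNIV::bool set)"
    proof
      show "\<phi> ` V' \<subseteq> V \<times> (UNIV::bool set)" unfolding \<phi>_def using pzV by auto
      show "V \<times> (UNIV::bool set) \<subseteq> \<phi> ` V'"
      proof
        fix vb assume "vb \<in> V \<times> (UNIV::bool set)"
        then obtain v bb where vb: "vb = (v, bb)" "v \<in> V" by auto
        then obtain z where z: "z \<in> V'" "p z = v" using pV by blast
        show "vb \<in> \<phi> ` V'"
        proof (cases "(z \<in> S) = bb")
          case True
          then have "\<phi> z = vb" unfolding \<phi>_def using vb z by simp
          then show ?thesis using z(1) by blast
        next
          case False
          then have "\<phi> (c z) = vb" unfolding \<phi>_def using vb z cp side by auto
          then show ?thesis using cV[OF z(1)] by blast
        qed
      qed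
    qed
  qed
  have edges: "\<forall>x\<in>V'. \<forall>y\<in>V'. cdc_edge E (\<phi> x) (\<phi> y) \<longleftrightarrow> E' x y"
  proof (intro ballI iffI)
    fix x y assume x: "x \<in> V'" and y: "y \<in> V'" and e: "E' x y"
    then show "cdc_edge E (\<phi> x) (\<phi> y)" unfolding cdc_edge_def \<phi>_def using pE allcross by auto
  next
    fix x y assume x: "x \<in> V'" and y: "y \<in> V'" and e: "cdc_edge E (\<phi> x) (\<phi> y)"
    then have exy: "E (p x) (p y)" and sxy: "(y \<in> S) = (x \<notin> S)" unfolding cdc_edge_def \<phi>_def by auto
    have "p y \<in> {u\<in>V. E (p x) u}" using exy pzV[OF y] by simp
    then have "p y \<in> p ` {y\<in>V'. E' x y}" using loc[OF x] unfolding bij_betw_def by simp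
    then obtain y' where y': "y' \<in> V'" "E' x y'" "p y' = p y" by (auto simp: image_iff)
    have "y = y' \<or> y = c y'" using fib[OF y'(1) y] y' by simp
    moreover have "y' \<in> S \<longleftrightarrow> x \<notin> S" using allcross[OF y'(2)] by blast
    ultimately have "y = y'" using side[OF y'(1)] sxy by auto
    then show "E' x y" using y' by simp
  qed
  have fst: "\<forall>x\<in>V'. fst (\<phi> x) = p x" unfolding \<phi>_def by simp
  show ?thesis unfolding is_canonical_double_cover_def using bij edges fst by blast
qed


theorem proposition3p3:
  fixes V :: "'a set" and E :: "'a \<Rightarrow> 'a \<Rightarrow> bool"
    and V' :: "'b set" and E' :: "'b \<Rightarrow> 'b \<Rightarrow> bool"
    and p :: "'b \<Rightarrow> 'a" and G :: "('a \<Rightarrow> 'a) set"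
  assumes "simple_graph V E" and "simple_graph V' E'"
    and "connected_graph V E" and "connected_graph V' E'"
    and "two_cover V' E' V E p"
    and "is_subgroup G (aut V E)"
    and "vertex_transitive V G" and "edge_transitive E G"
    and "admissible V' E' p G"
  shows "(\<exists>K. is_complement V' E' p G K \<and> sectional V' V p K)
           \<longleftrightarrow> is_canonical_double_cover V' E' V E p"
proof
  assume "\<exists>K. is_complement V' E' p G K \<and> sectional V' V p K"
  then obtain K S where K: "is_complement V' E' p G K" and S: "is_section V' V p S"
    and inv: "\<forall>k\<in>K. k ` S = S" unfolding sectional_def by blast
  show "is_canonical_double_cover V' E' V E p"
    using fwd[OF assms(2) assms(4) assms(5) assms(8) assms(9) K S inv] .
next
  assume c: "is_canonical_double_cover V' E' V E p"
  have cov: "covering_projection V' E' V E p" using assms(5) unfolding two_cover_def by blast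
  show "\<exists>K. is_complement V' E' p G K \<and> sectional V' V p K"
    using bwd[OF assms(6) cov c] .
qed

end
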